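(* Let $\rho_1,\rho_2,k_1,k_2,L>0$, $0<\alpha<1$ and $\eta\ge 0$, and let $\mathcal{A}$ be the operator on $\mathcal{H}$ described in the context. For every $\lambda\in\mathbb{R}$, the operator $i\lambda I-\mathcal{A}:\mathcal{D}(\mathcal{A})\to\mathcal{H}$ is injective.
   Context: Set $\mu(\xi)=|\xi|^{(2\alpha-1)/2}$ for $\xi\in\mathbb{R}$ and $\mathfrak{C}=\pi^{-1}\sin(\alpha\pi)$. All function spaces are complex. Let $\mathbb{H}^1_0=\{(u,v)\in H^1(-L,0)\times H^1(0,L):\ u(-L)=v(L)=0,\ u(0)=v(0)\}$, $\mathbb{L}^2=L^2(-L,0)\times L^2(0,L)$, and $\mathcal{H}=\mathbb{H}^1_0\times\mathbb{L}^2\times L^2(\mathbb{R};\mathbb{L}^2)$, whose elements are written $\mathbb{U}=(u,v,U,V,\varphi_1,\varphi_2)$ with $(u,v)\in\mathbb{H}^1_0$, $(U,V)\in\mathbb{L}^2$, $\varphi_1\in L^2(\mathbb{R};L^2(-L,0))$, $\varphi_2\in L^2(\mathbb{R};L^2(0,L))$ (functions of $(x,\xi)$). $\mathcal{H}$ is a Hilbert space with inner product $\langle\mathbb{U},\tilde{\mathbb{U}}\rangle_{\mathcal H}=\rho_1\int_{-L}^0U\overline{\tilde U}dx+\rho_2\int_0^LV\overline{\tilde V}dx+k_1\int_{-L}^0u_x\overline{\tilde u_x}dx+k_2\int_0^Lv_x\overline{\tilde v_x}dx+\mathfrak{C}\int_{\mathbb R}\int_{-L}^0\varphi_1\overline{\tilde\varphi_1}\,dx\,d\xi+\mathfrak{C}\int_{\mathbb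 R}\int_0^L\varphi_2\overline{\tilde\varphi_2}\,dx\,d\xi$. The domain $\mathcal{D}(\mathcal{A})$ is the set of $\mathbb{U}=(u,v,U,V,\varphi_1,\varphi_2)\in\mathcal{H}$ such that $(U,V)\in\mathbb{H}^1_0$, $u\in H^2(-L,0)$, $v\in H^2(0,L)$, $k_1u_x(0)=k_2v_x(0)$, $|\xi|\varphi_1\in L^2(\mathbb{R};L^2(-L,0))$, $-(|\xi|^2+\eta)\varphi_1+\mu(\xi)U\in L^2(\mathbb{R};L^2(-L,0))$, $|\xi|\varphi_2\in L^2(\mathbb{R};L^2(0,L))$, $-(|\xi|^2+\eta)\varphi_2+\mu(\xi)V\in L^2(\mathbb{R};L^2(0,L))$; and $$\mathcal{A}\mathbb{U}=\Big(U,\ V,\ \tfrac{1}{\rho_1}\big[k_1u_{xx}-\mathfrak{C}\textstyle\int_{\mathbb R}\mu(\xi)\varphi_1(\cdot,\xi)d\xi\big],\ \tfrac{1}{\rho_2}\big[k_2v_{xx}-\mathfrak{C}\textstyle\int_{\mathbb R}\mu(\xi)\varphi_2(\cdot,\xi)d\xi\big],\ -(|\xi|^2+\eta)\varphi_1+\mu(\xi)U,\ -(|\xi|^2+\eta)\varphi_2+\mu(\xi)V\Big).$$ *)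

theory Defs
  imports "HOL-Analysis.Analysis"
begin

definition mu :: "real \<Rightarrow> real \<Rightarrow> real" where
  "mu \<alpha> \<xi> = \<bar>\<xi>\<bar> powr ((2 * \<alpha> - 1) / 2)"

definition frakC :: "real \<Rightarrow> real" where
  "frakC \<alpha> = sin (\<alpha> * pi) / pi"

definition L2_on :: "real \<Rightarrow> real \<Rightarrow> (real \<Rightarrow> complex) \<Rightarrow> bool" where
  "L2_on a b f \<longleftrightarrow>
     (\<lambda>x. indicator {a..b} x *\<^sub>R f x) \<in> borel_measurable lborel \<and>
     integrable lborel (\<lambda>x. indicator {a..b} x * (cmod (f x))\<^sup>2)"

text \<open>L2(R; L2(a,b)), functions of (x, xi), identified with L2 of the product (a,b) x R.\<close>
definition L2_prod :: "real \<Rightarrow> real \<Rightarrow> (real \<Rightarrow> real \<Rightarrow> complex) \<Rightarrow> bool" where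
  "L2_prod a b \<phi> \<longleftrightarrow>
     (\<lambda>z. indicator ({a..b} \<times> UNIV) z *\<^sub>R \<phi> (fst z) (snd z)) \<in> borel_measurable (lborel \<Otimes>\<^sub>M lborel) \<and>
     integrable (lborel \<Otimes>\<^sub>M lborel)
       (\<lambda>z. indicator ({a..b} \<times> UNIV) z * (cmod (\<phi> (fst z) (snd z)))\<^sup>2)"

definition test_fun :: "real \<Rightarrow> real \<Rightarrow> (real \<Rightarrow> real) \<Rightarrow> bool" where
  "test_fun a b \<psi> \<longleftrightarrow>
     (\<forall>n x. ((deriv ^^ n) \<psi>) differentiable (at x)) \<and>
     (\<exists>c d. a < c \<and> d < b \<and> (\<forall>x. x \<notin> {c..d} \<longrightarrow> \<psi> x = 0))"

definition weak_deriv :: "real \<Rightarrow> real \<Rightarrow> (real \<Rightarrow> complex) \<Rightarrow> (real \<Rightarrow> complex) \<Rightarrow> bool" where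
  "weak_deriv a b f g \<longleftrightarrow>
     (\<forall>\<psi>. test_fun a b \<psi> \<longrightarrow>
        (LINT x:{a..b}|lborel. f x * complex_of_real (deriv \<psi> x))
          = - (LINT x:{a..b}|lborel. g x * complex_of_real (\<psi> x)))"

text \<open>H1(a,b) with derivative g; f is taken to be the continuous representative on [a,b].\<close>
definition H1_with :: "real \<Rightarrow> real \<Rightarrow> (real \<Rightarrow> complex) \<Rightarrow> (real \<Rightarrow> complex) \<Rightarrow> bool" where
  "H1_with a b f g \<longleftrightarrow>
     L2_on a b f \<and> continuous_on {a..b} f \<and> L2_on a b g \<and> weak_deriv a b f g"

definition H1 :: "real \<Rightarrow> real \<Rightarrow> (real \<Rightarrow> complex) \<Rightarrow> bool" where
  "H1 a b f \<longleftrightarrow> (\<exists>g. H1_with a b f g)"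

definition H10 :: "real \<Rightarrow> (real \<Rightarrow> complex) \<Rightarrow> (real \<Rightarrow> complex) \<Rightarrow> bool" where
  "H10 L u v \<longleftrightarrow> H1 (-L) 0 u \<and> H1 0 L v \<and> u (-L) = 0 \<and> v L = 0 \<and> u 0 = v 0"

end

theory Submission
  imports Defs "HOL-Computational_Algebra.Polynomial"
begin



definition hP :: "real poly \<Rightarrow> real \<Rightarrow> real" where
  "hP P t = (if t > 0 then poly P (1/t) * exp (-1/t) else 0)"

definition Qp :: "real poly \<Rightarrow> real poly" where
  "Qp P = [:0,0,1:] * (P - pderiv P)"

lemma lim_poly_exp: fixes R :: "real poly" shows "((\<lambda>y. poly R y * exp (-y)) \<longlongrightarrow> 0) at_top"
proof -
  have "((\<lambda>y::real. \<Sum>i\<le>degree R. coeff R i * (y ^ i / exp y)) \<longlongrightarrow> (\<Sum>i\<le>degree R. coeff R i * 0)) at_top"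
    by (intro tendsto_sum tendsto_mult tendsto_const tendsto_power_div_exp_0)
  moreover have "(\<lambda>y. \<Sum>i\<le>degree R. coeff R i * (y ^ i / exp y)) = (\<lambda>y. poly R y * exp (-y))"
    by (auto simp: poly_altdef sum_divide_distrib exp_minus field_simps)
  ultimately show ?thesis by simp
qed

lemma hP_deriv_pos:
  assumes "t > 0"
  shows "(hP P has_real_derivative hP (Qp P) t) (at t)"
proof -
  have d: "((\<lambda>s. poly P (1/s) * exp (-1/s)) has_real_derivative
       (poly (pderiv P) (1/t) * (-1/t^2)) * exp (-1/t) + poly P (1/t) * (exp (-1/t) * (1/t^2))) (at t)"
    using assms
    by (auto intro!: derivative_eq_intros DERIV_chain2[OF poly_DERIV] simp: power2_eq_square field_simps)
  have eq: "(poly (pderiv P) (1/t) * (-1/t^2)) * exp (-1/t) + poly P (1/t) * (exp (-1/t) * (1/t^2)) = hP (Qp P) t"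
    using assms by (simp add: hP_def Qp_def algebra_simps power2_eq_square)
  show ?thesis
    apply (rule has_field_derivative_transform_within_open[where S="{0<..}"])
    using d eq assms by (auto simp: hP_def)
qed

lemma hP_deriv_neg:
  assumes "t < 0"
  shows "(hP P has_real_derivative hP (Qp P) t) (at t)"
proof -
  have "((\<lambda>s. 0) has_real_derivative hP (Qp P) t) (at t)" using assms by (simp add: hP_def)
  then show ?thesis
    apply (rule has_field_derivative_transform_within_open[where S="{..<0}"])
    using assms by (auto simp: hP_def)
qed

lemma hP_deriv_0: "(hP P has_real_derivative hP (Qp P) 0) (at 0)"
proof -
  have R: "((\<lambda>y. hP P y / y) \<longlongrightarrow> 0) (at_right 0)"
  proof -
    have "((\<lambda>y. poly (pCons 0 P) (inverse y) * exp (- inverse y)) \<longlongrightarrow> 0) (at_right 0)"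
      by (rule filterlim_compose[OF lim_poly_exp filterlim_inverse_at_top_right])
    moreover have "eventually (\<lambda>y. poly (pCons 0 P) (inverse y) * exp (- inverse y) = hP P y / y) (at_right 0)"
      by (auto simp: eventually_at_right_less hP_def field_simps intro!: eventually_mono[OF eventually_at_right_less])
    ultimately show ?thesis by (rule Lim_transform_eventually)
  qed
  have L: "((\<lambda>y. hP P y / y) \<longlongrightarrow> 0) (at_left 0)"
  proof -
    have "eventually (\<lambda>y. 0 = hP P y / y) (at_left (0::real))"
      by (rule eventually_mono[OF eventually_at_left_real[where a=0 and b="-1", simplified]]) (auto simp: hP_def)
    then show ?thesis by (rule Lim_transform_eventually[OF tendsto_const])
  qed
  have "((\<lambda>y. (hP P y - hP P 0) / (y - 0)) \<longlongrightarrow> 0) (at 0)"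
    using filterlim_split_at[OF L R] by (simp add: hP_def)
  then show ?thesis by (simp add: has_field_derivative_iff hP_def)
qed

lemma hP_deriv: "(hP P has_real_derivative hP (Qp P) t) (at t)"
  using hP_deriv_pos hP_deriv_neg hP_deriv_0 by (cases "t > 0"; cases "t < 0") auto

lemma deriv_hP: "deriv (hP P) = hP (Qp P)"
  using hP_deriv DERIV_imp_deriv by blast

lemma funpow_deriv_hP: "(deriv ^^ n) (hP P) = hP ((Qp ^^ n) P)"
  by (induction n) (auto simp: deriv_hP)




definition smooth :: "(real \<Rightarrow> real) \<Rightarrow> bool" where
  "smooth f \<longleftrightarrow> (\<forall>n x. ((deriv ^^ n) f) differentiable (at x))"

lemma chain_gen:
  assumes "\<And>y. (F has_real_derivative F' y) (at y)" "(g has_real_derivative g') (at x within s)"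
  shows "((\<lambda>x. F (g x)) has_real_derivative F' (g x) * g') (at x within s)"
  using DERIV_chain'[OF assms(2) assms(1)] by (simp add: mult.commute)

lemma hP_chain[derivative_intros]:
  "(g has_real_derivative g') (at x within s) \<Longrightarrow> ((\<lambda>x. hP P (g x)) has_real_derivative hP (Qp P) (g x) * g') (at x within s)"
  by (rule chain_gen[OF hP_deriv])

lemma smooth_closure:
  assumes T: "\<And>f. f \<in> T \<Longrightarrow> \<exists>f'\<in>T. \<forall>x. (f has_real_derivative f' x) (at x)"
    and g: "g \<in> T"
  shows "smooth g"
proof -
  have D: "(\<forall>x. f differentiable (at x)) \<and> deriv f \<in> T" if fT: "f \<in> T" for f
  proof -
    obtain f' where f': "f' \<in> T" "\<And>x. (f has_real_derivative f' x) (at x)" using T[OF fT] by blast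
    have "deriv f = f'" using f'(2) DERIV_imp_deriv by blast
    then show ?thesis using f' real_differentiable_def by blast
  qed
  have "(deriv ^^ n) g \<in> T" for n
    by (induction n) (use g D in auto)
  then show ?thesis unfolding smooth_def using D by blast
qed

definition h0 :: "real \<Rightarrow> real" where "h0 = hP 1"

lemma h0_pos: "t > 0 \<Longrightarrow> h0 t > 0" by (simp add: h0_def hP_def)
lemma h0_zero: "t \<le> 0 \<Longrightarrow> h0 t = 0" by (simp add: h0_def hP_def)
lemma h0_nonneg: "h0 t \<ge> 0" by (simp add: h0_def hP_def)

definition DD :: "real \<Rightarrow> real" where "DD t = h0 (1 + t) + h0 (1 - t)"

lemma DD_pos: "DD t > 0"
proof (cases "t > -1")
  case True then show ?thesis using h0_pos[of "1+t"] h0_nonneg[of "1-t"] by (simp add: DD_def)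
next
  case False then show ?thesis using h0_pos[of "1-t"] h0_nonneg[of "1+t"] by (simp add: DD_def)
qed

inductive_set TB :: "(real \<Rightarrow> real) set" where
  cst: "(\<lambda>t. c) \<in> TB"
| lft: "(\<lambda>t. hP P (1 + t)) \<in> TB"
| rgt: "(\<lambda>t. hP P (1 - t)) \<in> TB"
| inv: "(\<lambda>t. 1 / DD t) \<in> TB"
| add: "f \<in> TB \<Longrightarrow> g \<in> TB \<Longrightarrow> (\<lambda>t. f t + g t) \<in> TB"
| mul: "f \<in> TB \<Longrightarrow> g \<in> TB \<Longrightarrow> (\<lambda>t. f t * g t) \<in> TB"

lemma TB_deriv: "f \<in> TB \<Longrightarrow> \<exists>f'\<in>TB. \<forall>x. (f has_real_derivative f' x) (at x)"
proof (induction rule: TB.induct)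
  case (cst c)
  show ?case by (rule bexI[of _ "\<lambda>t. 0"]) (auto intro: TB.cst)
next
  case (lft P)
  have "((\<lambda>t. hP P (1 + t)) has_real_derivative hP (Qp P) (1 + x)) (at x)" for x
    by (auto intro!: derivative_eq_intros)
  then show ?case by (intro bexI[of _ "\<lambda>t. hP (Qp P) (1 + t)"]) (auto intro: TB.lft)
next
  case (rgt P)
  have "((\<lambda>t. hP P (1 - t)) has_real_derivative (-1) * hP (Qp P) (1 - x)) (at x)" for x
    by (auto intro!: derivative_eq_intros)
  moreover have "(\<lambda>t. (-1) * hP (Qp P) (1 - t)) \<in> TB" by (intro TB.intros)
  ultimately show ?case by (intro bexI[of _ "\<lambda>t. (-1) * hP (Qp P) (1 - t)"]) auto
next
  case inv
  have dD: "(DD has_real_derivative (hP (Qp 1) (1 + x) + (-1) * hP (Qp 1) (1 - x))) (at x)" for x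
    unfolding DD_def h0_def
    by (auto intro!: derivative_eq_intros)
  have "((\<lambda>t. 1 / DD t) has_real_derivative
      (-1) * ((hP (Qp 1) (1 + x) + (-1) * hP (Qp 1) (1 - x)) * ((1 / DD x) * (1 / DD x)))) (at x)" for x
    using DD_pos[of x] dD[of x]
    by (auto intro!: derivative_eq_intros simp: field_simps power2_eq_square)
  moreover have "(\<lambda>x. (-1) * ((hP (Qp 1) (1 + x) + (-1) * hP (Qp 1) (1 - x)) * ((1 / DD x) * (1 / DD x)))) \<in> TB"
    by (intro TB.intros)
  ultimately show ?case by (intro bexI[of _ "\<lambda>x. (-1) * ((hP (Qp 1) (1 + x) + (-1) * hP (Qp 1) (1 - x)) * ((1 / DD x) * (1 / DD x)))"]) auto
next
  case (add f g)
  then obtain f' g' where "f'\<in>TB" "g'\<in>TB" "\<forall>x. (f has_real_derivative f' x) (at x)" "\<forall>x. (g has_real_derivative g' x) (at x)"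
    by blast
  then show ?case by (intro bexI[of _ "\<lambda>t. f' t + g' t"]) (auto intro!: derivative_eq_intros TB.add)
next
  case (mul f g)
  then obtain f' g' where "f'\<in>TB" "g'\<in>TB" "\<forall>x. (f has_real_derivative f' x) (at x)" "\<forall>x. (g has_real_derivative g' x) (at x)"
    by blast
  then show ?case using mul.hyps by (intro bexI[of _ "\<lambda>t. f' t * g t + f t * g' t"]) (auto intro!: derivative_eq_intros TB.add TB.mul)
qed

definition BB :: "real \<Rightarrow> real" where "BB t = h0 (1 + t) * (1 / DD t)"

lemma BB_TB: "BB \<in> TB"
  unfolding BB_def h0_def by (intro TB.intros)

lemma smooth_BB: "smooth BB"
  using smooth_closure[OF TB_deriv BB_TB] by blast

lemma BB_deriv: "(BB has_real_derivative deriv BB x) (at x)"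
  using TB_deriv[OF BB_TB] DERIV_imp_deriv by metis

lemma BB_low: "t \<le> -1 \<Longrightarrow> BB t = 0"
  by (simp add: BB_def h0_zero)

lemma BB_high: "t \<ge> 1 \<Longrightarrow> BB t = 1"
  using h0_pos[of "1+t"] by (simp add: BB_def DD_def h0_zero)

lemma BB_range: "0 \<le> BB t \<and> BB t \<le> 1"
  using DD_pos[of t] h0_nonneg[of "1+t"] h0_nonneg[of "1-t"]
  by (simp add: BB_def DD_def field_simps)

lemma dBB_zero: assumes "\<bar>t\<bar> > 1" shows "deriv BB t = 0"
proof (cases "t > 1")
  case True
  have "((\<lambda>s. 1) has_real_derivative 0) (at t)" by simp
  then have "(BB has_real_derivative 0) (at t)"
    by (rule has_field_derivative_transform_within_open[where S="{1<..}"]) (use True BB_high in auto)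
  then show ?thesis by (rule DERIV_imp_deriv)
next
  case False
  then have "t < -1" using assms by auto
  have "((\<lambda>s. 0) has_real_derivative 0) (at t)" by simp
  then have "(BB has_real_derivative 0) (at t)"
    by (rule has_field_derivative_transform_within_open[where S="{..<-1}"]) (use \<open>t < -1\<close> BB_low in auto)
  then show ?thesis by (rule DERIV_imp_deriv)
qed

lemma cont_dBB: "continuous_on S (deriv BB)"
proof -
  have "(deriv ^^ 1) BB differentiable (at x)" for x using smooth_BB unfolding smooth_def by blast
  then show ?thesis by (auto intro!: continuous_at_imp_continuous_on differentiable_imp_continuous_within)
qed

lemma cont_BB: "continuous_on S BB"
  using BB_deriv by (auto intro!: continuous_at_imp_continuous_on DERIV_isCont)

lemma smooth_dd:
  assumes "smooth f"
  shows "((deriv ^^ n) f has_real_derivative (deriv ^^ Suc n) f y) (at y)"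
  using assms unfolding smooth_def by (simp add: DERIV_deriv_iff_real_differentiable)

lemma smooth_affine_dd:
  assumes "smooth f"
  shows "((\<lambda>t. a ^ n * (deriv ^^ n) f (a * t + b)) has_real_derivative a ^ Suc n * (deriv ^^ Suc n) f (a * x + b)) (at x)"
proof -
  have l: "((\<lambda>t. a * t + b) has_real_derivative a) (at x)"
    by (auto intro!: derivative_eq_intros)
  have c: "((\<lambda>t. (deriv ^^ n) f (a * t + b)) has_real_derivative (deriv ^^ Suc n) f (a * x + b) * a) (at x)"
    by (rule chain_gen[OF smooth_dd[OF assms] l])
  show ?thesis using DERIV_cmult[OF c, of "a ^ n"] by (simp add: algebra_simps)
qed

lemma smooth_affine_funpow:
  assumes "smooth f"
  shows "(deriv ^^ n) (\<lambda>t. f (a * t + b)) = (\<lambda>t. a ^ n * (deriv ^^ n) f (a * t + b))"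
proof (induction n)
  case 0 then show ?case by simp
next
  case (Suc n)
  have "(deriv ^^ Suc n) (\<lambda>t. f (a * t + b)) = deriv ((deriv ^^ n) (\<lambda>t. f (a * t + b)))" by simp
  also have "\<dots> = (\<lambda>t. a ^ Suc n * (deriv ^^ Suc n) f (a * t + b))"
    unfolding Suc by (rule ext, rule DERIV_imp_deriv, rule smooth_affine_dd[OF assms])
  finally show ?case .
qed

lemma smooth_affine: "smooth f \<Longrightarrow> smooth (\<lambda>t. f (a * t + b))"
  unfolding smooth_def[of "\<lambda>t. f (a * t + b)"]
  by (subst smooth_affine_funpow) (auto simp: real_differentiable_def intro: smooth_affine_dd)

lemma smooth_diff_funpow:
  assumes "smooth f" "smooth g"
  shows "(deriv ^^ n) (\<lambda>t. f t - g t) = (\<lambda>t. (deriv ^^ n) f t - (deriv ^^ n) g t)"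
proof (induction n)
  case 0 then show ?case by simp
next
  case (Suc n)
  have "(deriv ^^ Suc n) (\<lambda>t. f t - g t) = deriv ((deriv ^^ n) (\<lambda>t. f t - g t))" by simp
  also have "\<dots> = (\<lambda>t. (deriv ^^ Suc n) f t - (deriv ^^ Suc n) g t)"
    unfolding Suc
    by (rule ext, rule DERIV_imp_deriv, rule DERIV_diff; rule smooth_dd, fact)
  finally show ?case .
qed

lemma smooth_diff: "smooth f \<Longrightarrow> smooth g \<Longrightarrow> smooth (\<lambda>t. f t - g t)"
  unfolding smooth_def[of "\<lambda>t. f t - g t"]
  by (subst smooth_diff_funpow) (auto simp: real_differentiable_def intro!: DERIV_diff smooth_dd)




lemma dBB_bound: "\<exists>M>0. \<forall>s. \<bar>deriv BB s\<bar> \<le> M"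
proof -
  have "bounded (deriv BB ` {-1..1})"
    by (intro compact_imp_bounded compact_continuous_image cont_dBB compact_Icc)
  then obtain M where M: "M > 0" "\<forall>y\<in>deriv BB ` {-1..1}. norm y \<le> M" by (auto simp: bounded_pos)
  have "\<bar>deriv BB s\<bar> \<le> M" for s
  proof (cases "\<bar>s\<bar> > 1")
    case True then show ?thesis using dBB_zero M by simp
  next
    case False
    then have "s \<in> {-1..1}" by (auto simp: abs_if split: if_splits)
    then show ?thesis using M(2) by auto
  qed
  then show ?thesis using M by blast
qed

lemma BB_scaled_deriv:
  assumes "\<epsilon> > 0"
  shows "((\<lambda>t. BB ((t - x) / \<epsilon>)) has_real_derivative deriv BB ((t - x) / \<epsilon>) / \<epsilon>) (at t)"
proof -
  have l: "((\<lambda>t. (t - x) / \<epsilon>) has_real_derivative 1 / \<epsilon>) (at t)"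
    using assms by (auto intro!: derivative_eq_intros)
  show ?thesis using chain_gen[OF BB_deriv l] by simp
qed

lemma BB_scaled_integral:
  assumes "\<epsilon> > 0"
  shows "((\<lambda>t. deriv BB ((t - x) / \<epsilon>) / \<epsilon>) has_integral 1) {x - \<epsilon>..x + \<epsilon>}"
proof -
  have "((\<lambda>t. deriv BB ((t - x) / \<epsilon>) / \<epsilon>) has_integral (BB ((x + \<epsilon> - x) / \<epsilon>) - BB ((x - \<epsilon> - x) / \<epsilon>))) {x - \<epsilon>..x + \<epsilon>}"
    apply (rule fundamental_theorem_of_calculus)
    using assms BB_scaled_deriv[OF assms]
    by (auto simp: has_real_derivative_iff_has_vector_derivative[symmetric] intro: has_field_derivative_at_within)
  moreover have "BB ((x + \<epsilon> - x) / \<epsilon>) - BB ((x - \<epsilon> - x) / \<epsilon>) = 1"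
    using assms BB_high[of 1] BB_low[of "-1"] by simp
  ultimately show ?thesis by simp
qed

lemma moll:
  fixes w :: "real \<Rightarrow> complex"
  assumes cw: "continuous_on {lo..hi} w" and x: "lo < x" "x < hi" and eta: "\<eta> > 0"
  shows "\<exists>\<delta>>0. \<forall>\<epsilon>. 0 < \<epsilon> \<and> \<epsilon> < \<delta> \<longrightarrow>
           norm (integral {lo..hi} (\<lambda>t. w t * of_real (deriv BB ((t - x) / \<epsilon>) / \<epsilon>)) - w x) \<le> \<eta>"
proof -
  obtain Mb where Mb: "Mb > 0" "\<And>s. \<bar>deriv BB s\<bar> \<le> Mb" using dBB_bound by blast
  have xin: "x \<in> {lo..hi}" using x by auto
  obtain d0 where d0: "d0 > 0" "\<And>t. t \<in> {lo..hi} \<Longrightarrow> dist t x < d0 \<Longrightarrow> dist (w t) (w x) < \<eta> / (2 * Mb)"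
    using cw xin eta Mb(1) unfolding continuous_on_iff by (metis divide_pos_pos mult_pos_pos zero_less_numeral)
  define \<delta> where "\<delta> = min d0 (min (x - lo) (hi - x))"
  have "\<delta> > 0" using d0 x by (simp add: \<delta>_def)
  moreover have "norm (integral {lo..hi} (\<lambda>t. w t * of_real (deriv BB ((t - x) / \<epsilon>) / \<epsilon>)) - w x) \<le> \<eta>"
    if e: "0 < \<epsilon>" "\<epsilon> < \<delta>" for \<epsilon>
  proof -
    let ?F = "\<lambda>t. w t * of_real (deriv BB ((t - x) / \<epsilon>) / \<epsilon>)"
    let ?G = "\<lambda>t. w x * of_real (deriv BB ((t - x) / \<epsilon>) / \<epsilon>)"
    have sub: "{x - \<epsilon>..x + \<epsilon>} \<subseteq> {lo..hi}" using e by (auto simp: \<delta>_def)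
    have cF: "continuous_on {x - \<epsilon>..x + \<epsilon>} ?F"
      by (intro continuous_intros continuous_on_subset[OF cw sub] continuous_on_compose2[OF cont_dBB]) (use e in auto)
    have zero: "?F t = 0" if "t \<notin> {x - \<epsilon>..x + \<epsilon>}" for t
    proof -
      have "\<bar>(t - x) / \<epsilon>\<bar> > 1" using that e by (auto simp: abs_if field_simps split: if_splits)
      then show ?thesis using dBB_zero by simp
    qed
    have hF: "(?F has_integral integral {x - \<epsilon>..x + \<epsilon>} ?F) {x - \<epsilon>..x + \<epsilon>}"
      using integrable_continuous_interval[OF cF] by (rule integrable_integral)
    have eqI: "integral {lo..hi} ?F = integral {x - \<epsilon>..x + \<epsilon>} ?F"
      by (rule integral_unique, rule has_integral_on_superset[OF hF zero sub])
    have hG: "(?G has_integral w x) {x - \<epsilon>..x + \<epsilon>}"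
      using has_integral_mult_right[OF has_integral_of_real[OF BB_scaled_integral[OF e(1), of x]], of "w x"]
      by simp
    have hD: "((\<lambda>t. ?F t - ?G t) has_integral (integral {x - \<epsilon>..x + \<epsilon>} ?F - w x)) {x - \<epsilon>..x + \<epsilon>}"
      by (rule has_integral_diff[OF hF hG])
    have bnd: "norm (?F t - ?G t) \<le> \<eta> / (2 * \<epsilon>)" if t: "t \<in> cbox (x - \<epsilon>) (x + \<epsilon>)" for t
    proof -
      have tin: "t \<in> {lo..hi}" "dist t x < d0" using t sub e by (auto simp: \<delta>_def dist_real_def)
      have w: "norm (w t - w x) \<le> \<eta> / (2 * Mb)" using d0(2)[OF tin] by (simp add: dist_norm less_imp_le)
      have "?F t - ?G t = (w t - w x) * of_real (deriv BB ((t - x) / \<epsilon>) / \<epsilon>)"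
        by (simp only: left_diff_distrib)
      then have "norm (?F t - ?G t) = norm (w t - w x) * (\<bar>deriv BB ((t - x) / \<epsilon>)\<bar> / \<epsilon>)"
        using e by (simp only: norm_mult norm_of_real) simp
      also have "\<dots> \<le> (\<eta> / (2 * Mb)) * (Mb / \<epsilon>)"
        using w Mb e eta by (intro mult_mono divide_right_mono) auto
      also have "\<dots> = \<eta> / (2 * \<epsilon>)" using Mb(1) by (simp add: field_simps)
      finally show ?thesis .
    qed
    have "norm (integral {x - \<epsilon>..x + \<epsilon>} ?F - w x) \<le> \<eta> / (2 * \<epsilon>) * Henstock_Kurzweil_Integration.content (cbox (x - \<epsilon>) (x + \<epsilon>))"
      by (rule has_integral_bound[of _ "\<lambda>t. ?F t - ?G t"]) (use eta e hD bnd in auto)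
    also have "\<dots> = \<eta>" using e by simp
    finally show ?thesis using eqI by (simp only:)
  qed
  ultimately show ?thesis by blast
qed

lemma step_approx:
  fixes h :: "real \<Rightarrow> complex"
  assumes ch: "continuous_on {lo..hi} h" and Mh: "\<And>t. t \<in> {lo..hi} \<Longrightarrow> norm (h t) \<le> Mh"
    and e: "\<epsilon> > 0" "lo < x1 - \<epsilon>" "x1 < x2" "x2 + \<epsilon> < hi"
  shows "norm (integral {lo..hi} (\<lambda>t. h t * of_real (BB ((t - x1) / \<epsilon>) - BB ((t - x2) / \<epsilon>)))
                - integral {x1..x2} h) \<le> 8 * Mh * \<epsilon>"
proof -
  define \<psi> where "\<psi> t = BB ((t - x1) / \<epsilon>) - BB ((t - x2) / \<epsilon>)" for t
  let ?f1 = "\<lambda>t. h t * of_real (\<psi> t)"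
  let ?f2 = "\<lambda>t. if t \<in> {x1..x2} then h t else 0"
  let ?C = "2 * Mh"
  let ?g = "\<lambda>t. (if t \<in> {x1 - \<epsilon>..x1 + \<epsilon>} then ?C else 0) + (if t \<in> {x2 - \<epsilon>..x2 + \<epsilon>} then ?C else 0)"
  have "lo \<in> {lo..hi}" using e by auto
  then have Mh0: "Mh \<ge> 0" using Mh[of lo] norm_ge_zero order.trans by blast
  have c\<psi>: "continuous_on {lo..hi} \<psi>"
    unfolding \<psi>_def using e by (intro continuous_intros continuous_on_compose2[OF cont_BB]) auto
  have i1: "?f1 integrable_on {lo..hi}"
    by (intro integrable_continuous_interval continuous_intros ch c\<psi>)
  have sub12: "{x1..x2} \<inter> {lo..hi} = {x1..x2}" using e by auto
  have i2: "?f2 integrable_on {lo..hi}"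
    unfolding integrable_restrict_Int sub12
    by (intro integrable_continuous_interval continuous_on_subset[OF ch]) (use e in auto)
  have I2: "integral {lo..hi} ?f2 = integral {x1..x2} h"
    unfolding integral_restrict_Int sub12 ..
  have subA: "{x1 - \<epsilon>..x1 + \<epsilon>} \<inter> {lo..hi} = {x1 - \<epsilon>..x1 + \<epsilon>}"
    and subB: "{x2 - \<epsilon>..x2 + \<epsilon>} \<inter> {lo..hi} = {x2 - \<epsilon>..x2 + \<epsilon>}" using e by auto
  have gA: "((\<lambda>t. if t \<in> {x1 - \<epsilon>..x1 + \<epsilon>} then ?C else 0) has_integral ?C * (2 * \<epsilon>)) {lo..hi}"
    unfolding has_integral_restrict_Int subA using has_integral_const_real[of ?C "x1 - \<epsilon>" "x1 + \<epsilon>"] e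
    by (simp add: algebra_simps)
  have gB: "((\<lambda>t. if t \<in> {x2 - \<epsilon>..x2 + \<epsilon>} then ?C else 0) has_integral ?C * (2 * \<epsilon>)) {lo..hi}"
    unfolding has_integral_restrict_Int subB using has_integral_const_real[of ?C "x2 - \<epsilon>" "x2 + \<epsilon>"] e
    by (simp add: algebra_simps)
  have hg: "(?g has_integral 8 * Mh * \<epsilon>) {lo..hi}"
    using has_integral_add[OF gA gB] by (simp add: algebra_simps)
  have \<psi>b: "\<bar>\<psi> t\<bar> \<le> 1" for t using BB_range[of "(t - x1) / \<epsilon>"] BB_range[of "(t - x2) / \<epsilon>"]
    unfolding \<psi>_def by linarith
  have bnd: "norm (?f1 t - ?f2 t) \<le> ?g t" if t: "t \<in> {lo..hi}" for t
  proof (cases "t \<in> {x1 - \<epsilon>..x1 + \<epsilon>} \<or> t \<in> {x2 - \<epsilon>..x2 + \<epsilon>}")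
    case True
    have "?g t \<ge> ?C" using True Mh0 by auto
    moreover have "norm (?f1 t - ?f2 t) \<le> ?C"
    proof (cases "t \<in> {x1..x2}")
      case True
      have "?f1 t - ?f2 t = h t * of_real (\<psi> t - 1)" using True by (simp add: algebra_simps)
      then have "norm (?f1 t - ?f2 t) = norm (h t) * \<bar>\<psi> t - 1\<bar>"
        by (simp only: norm_mult norm_of_real)
      also have "\<dots> \<le> Mh * 2" using Mh[OF t] \<psi>b[of t] Mh0 by (intro mult_mono) auto
      finally show ?thesis by simp
    next
      case False
      have "?f1 t - ?f2 t = h t * of_real (\<psi> t)" using False by (simp only: if_False) simp
      then have "norm (?f1 t - ?f2 t) = norm (h t) * \<bar>\<psi> t\<bar>"
        by (simp only: norm_mult norm_of_real)
      also have "\<dots> \<le> Mh * 1" using Mh[OF t] \<psi>b[of t] Mh0 by (intro mult_mono) auto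
      finally show ?thesis using Mh0 by simp
    qed
    ultimately show ?thesis by linarith
  next
    case False
    have "\<psi> t = (if t \<in> {x1..x2} then 1 else 0)"
    proof -
      have nf: "\<not> (x1 - \<epsilon> \<le> t \<and> t \<le> x1 + \<epsilon>)" "\<not> (x2 - \<epsilon> \<le> t \<and> t \<le> x2 + \<epsilon>)"
        using False by auto
      consider "t < x1 - \<epsilon>" | "x1 + \<epsilon> < t" "t < x2 - \<epsilon>" | "x2 + \<epsilon> < t" using nf by linarith
      then show ?thesis
      proof cases
        case 1
        then have "(t - x1) / \<epsilon> \<le> -1" "(t - x2) / \<epsilon> \<le> -1" using e by (auto simp: field_simps)
        then show ?thesis using 1 e by (auto simp: \<psi>_def BB_low)
      next
        case 2
        then have "(t - x1) / \<epsilon> \<ge> 1" "(t - x2) / \<epsilon> \<le> -1" using e by (auto simp: field_simps)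
        then show ?thesis using 2 e by (auto simp: \<psi>_def BB_low BB_high)
      next
        case 3
        then have "(t - x1) / \<epsilon> \<ge> 1" "(t - x2) / \<epsilon> \<ge> 1" using e by (auto simp: field_simps)
        then show ?thesis using 3 e by (auto simp: \<psi>_def BB_high)
      qed
    qed
    then have "?f1 t - ?f2 t = 0" by simp
    then show ?thesis using Mh0 by simp
  qed
  have "norm (integral {lo..hi} (\<lambda>t. ?f1 t - ?f2 t)) \<le> integral {lo..hi} ?g"
    by (rule integral_norm_bound_integral[OF integrable_diff[OF i1 i2] _ bnd]) (use hg in auto)
  moreover have "integral {lo..hi} (\<lambda>t. ?f1 t - ?f2 t) = integral {lo..hi} ?f1 - integral {x1..x2} h"
    using integral_diff[OF i1 i2] I2 by simp
  moreover have "integral {lo..hi} ?g = 8 * Mh * \<epsilon>" using hg by (rule integral_unique)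
  ultimately show ?thesis by (simp add: \<psi>_def)
qed

lemma cont_bound:
  fixes h :: "real \<Rightarrow> complex"
  assumes "continuous_on {lo..hi} h"
  shows "\<exists>M>0. \<forall>t\<in>{lo..hi}. norm (h t) \<le> M"
proof -
  have "bounded (h ` {lo..hi})"
    by (intro compact_imp_bounded compact_continuous_image assms compact_Icc)
  then show ?thesis by (auto simp: bounded_pos)
qed

lemma test_psi:
  assumes e: "\<epsilon> > 0" "lo < x1 - \<epsilon>" "x1 < x2" "x2 + \<epsilon> < hi"
  shows "test_fun lo hi (\<lambda>t. BB ((t - x1) / \<epsilon>) - BB ((t - x2) / \<epsilon>))"
proof -
  have eq: "(\<lambda>t. BB ((t - x1) / \<epsilon>) - BB ((t - x2) / \<epsilon>)) =
      (\<lambda>t. BB ((1 / \<epsilon>) * t + (- x1 / \<epsilon>)) - BB ((1 / \<epsilon>) * t + (- x2 / \<epsilon>)))"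
    by (rule ext) (simp add: diff_divide_distrib)
  have sm: "smooth (\<lambda>t. BB ((t - x1) / \<epsilon>) - BB ((t - x2) / \<epsilon>))"
    unfolding eq by (intro smooth_diff smooth_affine smooth_BB)
  have supp: "\<forall>t. t \<notin> {x1 - \<epsilon>..x2 + \<epsilon>} \<longrightarrow> BB ((t - x1) / \<epsilon>) - BB ((t - x2) / \<epsilon>) = 0"
  proof (intro allI impI)
    fix t assume "t \<notin> {x1 - \<epsilon>..x2 + \<epsilon>}"
    then consider "t < x1 - \<epsilon>" | "t > x2 + \<epsilon>" by force
    then show "BB ((t - x1) / \<epsilon>) - BB ((t - x2) / \<epsilon>) = 0"
    proof cases
      case 1
      then have "(t - x1) / \<epsilon> \<le> -1" "(t - x2) / \<epsilon> \<le> -1" using e by (auto simp: field_simps)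
      then show ?thesis by (simp add: BB_low)
    next
      case 2
      then have "(t - x1) / \<epsilon> \<ge> 1" "(t - x2) / \<epsilon> \<ge> 1" using e by (auto simp: field_simps)
      then show ?thesis by (simp add: BB_high)
    qed
  qed
  show ?thesis unfolding test_fun_def
    using sm supp e unfolding smooth_def by blast
qed

lemma deriv_psi:
  assumes e: "\<epsilon> > 0"
  shows "deriv (\<lambda>t. BB ((t - x1) / \<epsilon>) - BB ((t - x2) / \<epsilon>)) t =
     deriv BB ((t - x1) / \<epsilon>) / \<epsilon> - deriv BB ((t - x2) / \<epsilon>) / \<epsilon>"
  by (rule DERIV_imp_deriv, rule DERIV_diff; rule BB_scaled_deriv[OF e])

lemma key:
  fixes w h :: "real \<Rightarrow> complex"
  assumes cw: "continuous_on {lo..hi} w" and ch: "continuous_on {lo..hi} h"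
    and wd: "\<And>\<psi>. test_fun lo hi \<psi> \<Longrightarrow>
       integral {lo..hi} (\<lambda>x. w x * of_real (deriv \<psi> x)) = - integral {lo..hi} (\<lambda>x. h x * of_real (\<psi> x))"
    and x: "lo < x1" "x1 < x2" "x2 < hi"
  shows "w x2 - w x1 = integral {x1..x2} h"
proof -
  obtain Mh where Mh: "Mh > 0" "\<And>t. t \<in> {lo..hi} \<Longrightarrow> norm (h t) \<le> Mh" using cont_bound[OF ch] by blast
  let ?Z = "w x2 - w x1 - integral {x1..x2} h"
  have "norm ?Z \<le> \<eta>" if eta: "\<eta> > 0" for \<eta>
  proof -
    have e3: "\<eta> / 3 > 0" using eta by simp
    obtain d1 where d1: "d1 > 0" "\<And>\<epsilon>. 0 < \<epsilon> \<and> \<epsilon> < d1 \<Longrightarrow>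
       norm (integral {lo..hi} (\<lambda>t. w t * of_real (deriv BB ((t - x1) / \<epsilon>) / \<epsilon>)) - w x1) \<le> \<eta> / 3"
      using moll[OF cw _ _ e3, of x1] x by auto
    obtain d2 where d2: "d2 > 0" "\<And>\<epsilon>. 0 < \<epsilon> \<and> \<epsilon> < d2 \<Longrightarrow>
       norm (integral {lo..hi} (\<lambda>t. w t * of_real (deriv BB ((t - x2) / \<epsilon>) / \<epsilon>)) - w x2) \<le> \<eta> / 3"
      using moll[OF cw _ _ e3, of x2] x by auto
    define \<epsilon> where "\<epsilon> = min (min (d1 / 2) (d2 / 2)) (min (min ((x1 - lo) / 2) ((hi - x2) / 2)) (\<eta> / (24 * Mh)))"
    have a: "\<epsilon> \<le> d1 / 2" "\<epsilon> \<le> d2 / 2" "\<epsilon> \<le> (x1 - lo) / 2" "\<epsilon> \<le> (hi - x2) / 2" "\<epsilon> \<le> \<eta> / (24 * Mh)"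
      unfolding \<epsilon>_def by linarith+
    have "\<epsilon> > 0" unfolding \<epsilon>_def using d1 d2 x eta Mh by simp
    with a d1 d2 have ep: "\<epsilon> > 0" "\<epsilon> < d1" "\<epsilon> < d2" "lo < x1 - \<epsilon>" "x2 + \<epsilon> < hi" "\<epsilon> \<le> \<eta> / (24 * Mh)"
      by auto
    define \<psi> where "\<psi> = (\<lambda>t. BB ((t - x1) / \<epsilon>) - BB ((t - x2) / \<epsilon>))"
    define J1 where "J1 = integral {lo..hi} (\<lambda>t. w t * of_real (deriv BB ((t - x1) / \<epsilon>) / \<epsilon>))"
    define J2 where "J2 = integral {lo..hi} (\<lambda>t. w t * of_real (deriv BB ((t - x2) / \<epsilon>) / \<epsilon>))"
    define K where "K = integral {lo..hi} (\<lambda>t. h t * of_real (\<psi> t))"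
    have n1: "norm (J1 - w x1) \<le> \<eta> / 3" using d1(2)[of \<epsilon>] ep by (simp add: J1_def)
    have n2: "norm (J2 - w x2) \<le> \<eta> / 3" using d2(2)[of \<epsilon>] ep by (simp add: J2_def)
    have nK: "norm (K - integral {x1..x2} h) \<le> 8 * Mh * \<epsilon>"
      unfolding K_def \<psi>_def by (rule step_approx[OF ch Mh(2)]) (use ep x in auto)
    have "8 * Mh * \<epsilon> \<le> 8 * Mh * (\<eta> / (24 * Mh))" using ep(6) Mh(1) by (intro mult_left_mono) auto
    also have "\<dots> = \<eta> / 3" using Mh by simp
    finally have nK': "norm (K - integral {x1..x2} h) \<le> \<eta> / 3" using nK by linarith
    have cdb: "continuous_on {lo..hi} (\<lambda>t. w t * of_real (deriv BB ((t - x) / \<epsilon>) / \<epsilon>))" for x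
      using ep by (intro continuous_intros cw continuous_on_compose2[OF cont_dBB]) auto
    have "integral {lo..hi} (\<lambda>t. w t * of_real (deriv \<psi> t)) =
        integral {lo..hi} (\<lambda>t. w t * of_real (deriv BB ((t - x1) / \<epsilon>) / \<epsilon>) - w t * of_real (deriv BB ((t - x2) / \<epsilon>) / \<epsilon>))"
      unfolding \<psi>_def deriv_psi[OF ep(1)] by (simp add: algebra_simps)
    also have "\<dots> = J1 - J2" unfolding J1_def J2_def
      by (rule integral_diff; rule integrable_continuous_interval[OF cdb])
    finally have "J1 - J2 = - K" using wd[of \<psi>] test_psi[of \<epsilon> lo x1 x2 hi] ep x by (simp add: \<psi>_def K_def)
    then have "?Z = (w x2 - J2) - (w x1 - J1) + (K - integral {x1..x2} h)"
      by (simp add: algebra_simps)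
    then have "norm ?Z \<le> norm (J2 - w x2) + norm (J1 - w x1) + norm (K - integral {x1..x2} h)"
      by (smt (verit) norm_minus_commute norm_triangle_ineq4 norm_triangle_ineq)
    then show ?thesis using n1 n2 nK' by linarith
  qed
  then have "norm ?Z = 0"
    by (metis dual_order.antisym norm_ge_zero field_lbound_gt_zero le_less_linear less_le_not_le zero_less_norm_iff)
  then show ?thesis by simp
qed




lemma key_deriv:
  fixes w h :: "real \<Rightarrow> complex"
  assumes cw: "continuous_on {lo..hi} w" and ch: "continuous_on {lo..hi} h"
    and wd: "\<And>\<psi>. test_fun lo hi \<psi> \<Longrightarrow>
       integral {lo..hi} (\<lambda>x. w x * of_real (deriv \<psi> x)) = - integral {lo..hi} (\<lambda>x. h x * of_real (\<psi> x))"
    and x: "lo < x" "x < hi"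
  shows "(w has_vector_derivative h x) (at x)"
proof -
  define x0 where "x0 = (lo + x) / 2"
  have x0: "lo < x0" "x0 < x" using x by (auto simp: x0_def)
  have ch0: "continuous_on {x0..hi} h" using continuous_on_subset[OF ch] x0 by auto
  have "((\<lambda>y. integral {x0..y} h) has_vector_derivative h x) (at x within {x0..hi})"
    by (rule integral_has_vector_derivative[OF ch0]) (use x0 x in auto)
  then have "((\<lambda>y. integral {x0..y} h) has_vector_derivative h x) (at x)"
    using at_within_Icc_at[of x0 x hi] x0 x by simp
  then have d: "((\<lambda>y. w x0 + integral {x0..y} h) has_vector_derivative h x) (at x)"
    by (auto intro!: derivative_eq_intros)
  show ?thesis
  proof (rule has_vector_derivative_transform_within_open[OF d, of "{x0<..<hi}"])
    show "open {x0<..<hi}" by simp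
    show "x \<in> {x0<..<hi}" using x0 x by simp
    fix y assume "y \<in> {x0<..<hi}"
    then have "w y - w x0 = integral {x0..y} h"
      using key[OF cw ch wd, of x0 y] x0 by auto
    then show "w x0 + integral {x0..y} h = w y" by (metis diff_add_cancel add.commute)
  qed
qed

lemma weak_to_integral:
  fixes f g h :: "real \<Rightarrow> complex"
  assumes wd: "weak_deriv lo hi f g" and cf: "continuous_on {lo..hi} f" and ch: "continuous_on {lo..hi} h"
    and mg: "(\<lambda>x. indicator {lo..hi} x *\<^sub>R g x) \<in> borel_measurable lborel"
    and ae: "AE x in lborel. x \<in> {lo..hi} \<longrightarrow> g x = h x"
    and tf: "test_fun lo hi \<psi>"
  shows "integral {lo..hi} (\<lambda>x. f x * of_real (deriv \<psi> x)) = - integral {lo..hi} (\<lambda>x. h x * of_real (\<psi> x))"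
proof -
  have d0: "\<psi> differentiable (at x)" for x using tf unfolding test_fun_def by (metis funpow_0)
  have d1: "deriv \<psi> differentiable (at x)" for x using tf unfolding test_fun_def by (metis funpow_0 funpow_Suc_right o_apply)
  have c0: "continuous_on S \<psi>" for S using d0 by (auto intro!: continuous_at_imp_continuous_on differentiable_imp_continuous_within)
  have c1: "continuous_on S (deriv \<psi>)" for S using d1 by (auto intro!: continuous_at_imp_continuous_on differentiable_imp_continuous_within)
  have cL: "continuous_on {lo..hi} (\<lambda>x. f x * of_real (deriv \<psi> x))"
    by (intro continuous_intros cf continuous_on_compose2[OF c1[of UNIV]]) auto
  have cR: "continuous_on {lo..hi} (\<lambda>x. h x * of_real (\<psi> x))"
    by (intro continuous_intros ch continuous_on_compose2[OF c0[of UNIV]]) auto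
  have L: "(LINT x:{lo..hi}|lborel. f x * of_real (deriv \<psi> x)) = integral {lo..hi} (\<lambda>x. f x * of_real (deriv \<psi> x))"
    by (rule set_borel_integral_eq_integral(2)[OF borel_integrable_atLeastAtMost'[OF cL]])
  have si: "set_integrable lborel {lo..hi} (\<lambda>x. h x * of_real (\<psi> x))"
    by (rule borel_integrable_atLeastAtMost'[OF cR])
  have R: "(LINT x:{lo..hi}|lborel. h x * of_real (\<psi> x)) = integral {lo..hi} (\<lambda>x. h x * of_real (\<psi> x))"
    by (rule set_borel_integral_eq_integral(2)[OF si])
  have mpsi: "(\<lambda>x. complex_of_real (\<psi> x)) \<in> borel_measurable lborel"
  proof -
    have "continuous_on UNIV (\<lambda>x. complex_of_real (\<psi> x))" by (intro continuous_intros c0)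
    then have "(\<lambda>x. complex_of_real (\<psi> x)) \<in> borel_measurable borel" by (rule borel_measurable_continuous_onI)
    then show ?thesis by simp
  qed
  have m1: "(\<lambda>x. indicator {lo..hi} x *\<^sub>R (g x * of_real (\<psi> x))) \<in> borel_measurable lborel"
  proof -
    have "(\<lambda>x. (indicator {lo..hi} x *\<^sub>R g x) * of_real (\<psi> x)) \<in> borel_measurable lborel"
      using mg mpsi by measurable
    then show ?thesis by (simp add: mult.assoc)
  qed
  have m2: "(\<lambda>x. indicator {lo..hi} x *\<^sub>R (h x * of_real (\<psi> x))) \<in> borel_measurable lborel"
    using si unfolding set_integrable_def by (rule borel_measurable_integrable)
  have G: "(LINT x:{lo..hi}|lborel. g x * of_real (\<psi> x)) = (LINT x:{lo..hi}|lborel. h x * of_real (\<psi> x))"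
    unfolding set_lebesgue_integral_def
    by (rule integral_cong_AE[OF m1 m2]) (use ae in \<open>auto simp: indicator_def\<close>)
  show ?thesis using wd tf unfolding weak_deriv_def L[symmetric] R[symmetric] G[symmetric] by blast
qed

lemma bb_cnj: "bounded_bilinear (\<lambda>a b::complex. a * cnj b)"
proof
  show "\<exists>K. \<forall>a b::complex. norm (a * cnj b) \<le> norm a * norm b * K"
    by (rule exI[of _ 1]) (simp add: norm_mult)
qed (auto simp: algebra_simps scaleR_conv_of_real)

lemma energy:
  fixes u u1 :: "real \<Rightarrow> complex" and \<kappa> :: complex
  assumes le: "lo \<le> hi" and cu: "continuous_on {lo..hi} u" and cu1: "continuous_on {lo..hi} u1"
    and du: "\<And>x. x \<in> {lo<..<hi} \<Longrightarrow> (u has_vector_derivative u1 x) (at x)"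
    and du1: "\<And>x. x \<in> {lo<..<hi} \<Longrightarrow> (u1 has_vector_derivative \<kappa> * u x) (at x)"
  shows "\<kappa> * of_real (integral {lo..hi} (\<lambda>x. (cmod (u x))\<^sup>2)) =
     u1 hi * cnj (u hi) - u1 lo * cnj (u lo) - of_real (integral {lo..hi} (\<lambda>x. (cmod (u1 x))\<^sup>2))"
proof -
  let ?P = "integral {lo..hi} (\<lambda>x. (cmod (u1 x))\<^sup>2)"
  let ?A = "integral {lo..hi} (\<lambda>x. (cmod (u x))\<^sup>2)"
  have cP: "continuous_on {lo..hi} (\<lambda>x. (cmod (u1 x))\<^sup>2)" by (intro continuous_intros cu1)
  have cA: "continuous_on {lo..hi} (\<lambda>x. (cmod (u x))\<^sup>2)" by (intro continuous_intros cu)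
  have hP: "((\<lambda>x. (cmod (u1 x))\<^sup>2) has_integral ?P) {lo..hi}"
    using integrable_continuous_interval[OF cP] by (rule integrable_integral)
  have hA: "((\<lambda>x. (cmod (u x))\<^sup>2) has_integral ?A) {lo..hi}"
    using integrable_continuous_interval[OF cA] by (rule integrable_integral)
  have eq1: "u1 x * cnj (u1 x) = of_real ((cmod (u1 x))\<^sup>2)" for x
    by (simp add: complex_mult_cnj cmod_def)
  have eq2: "\<kappa> * u x * cnj (u x) = \<kappa> * of_real ((cmod (u x))\<^sup>2)" for x
    by (simp add: complex_mult_cnj cmod_def mult.assoc)
  have "((\<lambda>x. u1 x * cnj (u1 x)) has_integral
       (u1 hi * cnj (u hi) - u1 lo * cnj (u lo) - (u1 hi * cnj (u hi) - u1 lo * cnj (u lo) - of_real ?P))) {lo..hi}"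
    unfolding eq1 using has_integral_of_real[OF hP] by simp
  then have "((\<lambda>x. (\<kappa> * u x) * cnj (u x)) has_integral (u1 hi * cnj (u hi) - u1 lo * cnj (u lo) - of_real ?P)) {lo..hi}"
    using integration_by_parts_interior[OF bb_cnj le cu1 cu, of "\<lambda>x. \<kappa> * u x" u1 "u1 hi * cnj (u hi) - u1 lo * cnj (u lo) - of_real ?P"] du1 du
    by simp
  moreover have "((\<lambda>x. (\<kappa> * u x) * cnj (u x)) has_integral \<kappa> * of_real ?A) {lo..hi}"
    unfolding eq2 by (rule has_integral_mult_right[OF has_integral_of_real[OF hA]])
  ultimately show ?thesis using has_integral_unique by blast
qed




lemma pair_lborel: "pair_sigma_finite lborel lborel"
  by (simp add: pair_sigma_finite_def lborel.sigma_finite_measure_axioms)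

lemma mu_meas[measurable]: "(\<lambda>\<xi>. mu \<alpha> \<xi>) \<in> borel_measurable borel"
  unfolding mu_def by measurable

lemma AE_snd_nz: "AE z in lborel \<Otimes>\<^sub>M lborel. snd z \<noteq> (0::real)"
proof -
  interpret P: pair_sigma_finite lborel lborel by (rule pair_lborel)
  show ?thesis
    apply (rule pair_sigma_finite.AE_pair_measure[OF pair_lborel])
    subgoal by measurable
    subgoal by (simp add: AE_lborel_singleton)
    done
qed

definition dd :: "real \<Rightarrow> real \<Rightarrow> real \<Rightarrow> complex" where
  "dd lam \<eta> \<xi> = \<i> * complex_of_real lam + complex_of_real (\<xi>\<^sup>2 + \<eta>)"

definition cc :: "real \<Rightarrow> real \<Rightarrow> real \<Rightarrow> complex" where
  "cc \<alpha> lam \<eta> = (LINT \<xi>|lborel. complex_of_real (mu \<alpha> \<xi>) * (complex_of_real (mu \<alpha> \<xi>) / dd lam \<eta> \<xi>))"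

lemma dd_nz: "\<xi> \<noteq> 0 \<Longrightarrow> \<eta> \<ge> 0 \<Longrightarrow> dd lam \<eta> \<xi> \<noteq> 0"
proof
  assume "\<xi> \<noteq> 0" "\<eta> \<ge> 0" "dd lam \<eta> \<xi> = 0"
  then have "Re (dd lam \<eta> \<xi>) = 0" by simp
  moreover have "Re (dd lam \<eta> \<xi>) = \<xi>\<^sup>2 + \<eta>" by (simp add: dd_def)
  moreover have "\<xi>\<^sup>2 > 0" using \<open>\<xi> \<noteq> 0\<close> by simp
  ultimately show False using \<open>\<eta> \<ge> 0\<close> by simp
qed

lemma phi_lemma:
  fixes \<phi> :: "real \<Rightarrow> real \<Rightarrow> complex" and W :: "real \<Rightarrow> complex"
  assumes mphi: "(\<lambda>z. indicator ({a..b} \<times> UNIV) z *\<^sub>R \<phi> (fst z) (snd z)) \<in> borel_measurable (lborel \<Otimes>\<^sub>M lborel)"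
    and eq: "AE z in lborel \<Otimes>\<^sub>M lborel. fst z \<in> {a..b} \<longrightarrow>
        \<i> * complex_of_real lam * \<phi> (fst z) (snd z)
          - (- complex_of_real ((snd z)\<^sup>2 + \<eta>) * \<phi> (fst z) (snd z)
             + complex_of_real (mu \<alpha> (snd z)) * W (fst z)) = 0"
    and eta: "\<eta> \<ge> 0"
  shows "AE z in lborel \<Otimes>\<^sub>M lborel. fst z \<in> {a..b} \<longrightarrow>
           \<phi> (fst z) (snd z) = complex_of_real (mu \<alpha> (snd z)) * W (fst z) / dd lam \<eta> (snd z)"
    and "AE x in lborel. x \<in> {a..b} \<longrightarrow>
           (LINT \<xi>|lborel. complex_of_real (mu \<alpha> \<xi>) * \<phi> x \<xi>) = W x * cc \<alpha> lam \<eta>"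
proof -
  show i: "AE z in lborel \<Otimes>\<^sub>M lborel. fst z \<in> {a..b} \<longrightarrow>
           \<phi> (fst z) (snd z) = complex_of_real (mu \<alpha> (snd z)) * W (fst z) / dd lam \<eta> (snd z)"
    using eq AE_snd_nz
  proof eventually_elim
    case (elim z)
    show ?case
    proof
      assume z: "fst z \<in> {a..b}"
      have nz: "dd lam \<eta> (snd z) \<noteq> 0" using dd_nz elim(2) eta by blast
      have "dd lam \<eta> (snd z) * \<phi> (fst z) (snd z) = complex_of_real (mu \<alpha> (snd z)) * W (fst z)"
        using elim(1) z by (simp add: dd_def algebra_simps)
      then show "\<phi> (fst z) (snd z) = complex_of_real (mu \<alpha> (snd z)) * W (fst z) / dd lam \<eta> (snd z)"
        using nz by (simp add: field_simps)
    qed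
  qed
  have "AE x in lborel. AE \<xi> in lborel. x \<in> {a..b} \<longrightarrow>
           \<phi> x \<xi> = complex_of_real (mu \<alpha> \<xi>) * W x / dd lam \<eta> \<xi>"
    using pair_sigma_finite.AE_pair[OF pair_lborel i] by (simp only: fst_conv snd_conv)
  then show "AE x in lborel. x \<in> {a..b} \<longrightarrow>
           (LINT \<xi>|lborel. complex_of_real (mu \<alpha> \<xi>) * \<phi> x \<xi>) = W x * cc \<alpha> lam \<eta>"
  proof eventually_elim
    case (elim x)
    show ?case
    proof
      assume x: "x \<in> {a..b}"
      have m1: "(\<lambda>y. (\<lambda>z. indicator ({a..b} \<times> UNIV) z *\<^sub>R \<phi> (fst z) (snd z)) (x, y)) \<in> borel_measurable lborel"
        by (rule measurable_Pair2[OF mphi]) simp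
      have eqf: "(\<lambda>y. (\<lambda>z. indicator ({a..b} \<times> UNIV) z *\<^sub>R \<phi> (fst z) (snd z)) (x, y)) = (\<lambda>\<xi>. \<phi> x \<xi>)"
        by (rule ext) (simp only: fst_conv snd_conv indicator_simps mem_Times_iff x UNIV_I simp_thms scaleR_one)
      have m1': "(\<lambda>\<xi>. \<phi> x \<xi>) \<in> borel_measurable lborel"
        using m1 unfolding eqf .
      have m2: "(\<lambda>\<xi>. complex_of_real (mu \<alpha> \<xi>) * \<phi> x \<xi>) \<in> borel_measurable lborel"
        using m1' by measurable
      have m3: "(\<lambda>\<xi>. complex_of_real (mu \<alpha> \<xi>) * (complex_of_real (mu \<alpha> \<xi>) * W x / dd lam \<eta> \<xi>)) \<in> borel_measurable lborel"
        unfolding dd_def by measurable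
      have "(LINT \<xi>|lborel. complex_of_real (mu \<alpha> \<xi>) * \<phi> x \<xi>) =
            (LINT \<xi>|lborel. complex_of_real (mu \<alpha> \<xi>) * (complex_of_real (mu \<alpha> \<xi>) * W x / dd lam \<eta> \<xi>))"
        by (rule integral_cong_AE[OF m2 m3]) (use elim x in \<open>auto elim!: eventually_mono\<close>)
      also have "\<dots> = (LINT \<xi>|lborel. W x * (complex_of_real (mu \<alpha> \<xi>) * (complex_of_real (mu \<alpha> \<xi>) / dd lam \<eta> \<xi>)))"
        by (simp add: algebra_simps)
      also have "\<dots> = W x * cc \<alpha> lam \<eta>" unfolding cc_def by (rule integral_mult_right_zero)
      finally show "(LINT \<xi>|lborel. complex_of_real (mu \<alpha> \<xi>) * \<phi> x \<xi>) = W x * cc \<alpha> lam \<eta>" .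
    qed
  qed
qed




lemma hk_to_lborel:
  fixes f :: "real \<Rightarrow> real"
  assumes m: "f \<in> borel_measurable borel" and nn: "\<And>x. 0 \<le> f x" and I: "(f has_integral I) UNIV"
  shows "integrable lborel f"
proof -
  have "integral\<^sup>N lborel f = I" by (rule nn_integral_has_integral_lborel[OF m nn I])
  moreover have "I \<ge> 0" using has_integral_nonneg[OF I] nn by auto
  ultimately show ?thesis
    by (intro integrableI_nn_integral_finite[where x=I]) (use m nn in auto)
qed

lemma integrable_refl:
  fixes f :: "real \<Rightarrow> real"
  assumes "integrable lborel f"
  shows "integrable lborel (\<lambda>x. f (- x))"
  using lborel_integrable_real_affine_iff[of "-1" f 0] assms by simp

lemma int_k:
  assumes p: "p > -1"
  shows "integrable lborel (\<lambda>x::real. if x \<in> {0..1} then x powr p else 0)"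
proof (rule hk_to_lborel)
  show "(\<lambda>x::real. if x \<in> {0..1} then x powr p else 0) \<in> borel_measurable borel" by measurable
  show "0 \<le> (if x \<in> {0..1} then x powr p else 0)" for x :: real by simp
  show "((\<lambda>x::real. if x \<in> {0..1} then x powr p else 0) has_integral (1 powr (p+1) / (p+1))) UNIV"
    unfolding has_integral_restrict_UNIV using has_integral_powr_from_0[OF p, of 1] by simp
qed

lemma int_m:
  assumes p: "p < -1"
  shows "integrable lborel (\<lambda>x::real. if x \<in> {1..} then x powr p else 0)"
proof (rule hk_to_lborel)
  show "(\<lambda>x::real. if x \<in> {1..} then x powr p else 0) \<in> borel_measurable borel" by measurable
  show "0 \<le> (if x \<in> {1..} then x powr p else 0)" for x :: real by simp
  show "((\<lambda>x::real. if x \<in> {1..} then x powr p else 0) has_integral (-(1 powr (p+1)) / (p+1))) UNIV"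
    unfolding has_integral_restrict_UNIV using has_integral_powr_to_inf[OF p, of 1] by simp
qed

lemma mu_sq: "mu \<alpha> \<xi> * mu \<alpha> \<xi> = \<bar>\<xi>\<bar> powr (2 * \<alpha> - 1)"
proof -
  have "mu \<alpha> \<xi> * mu \<alpha> \<xi> = \<bar>\<xi>\<bar> powr ((2 * \<alpha> - 1) / 2 + (2 * \<alpha> - 1) / 2)"
    unfolding mu_def by (simp only: powr_add[symmetric])
  then show ?thesis by simp
qed

lemma mu_pos: "\<xi> \<noteq> 0 \<Longrightarrow> mu \<alpha> \<xi> > 0" by (simp add: mu_def)
lemma mu_nn: "mu \<alpha> \<xi> \<ge> 0" by (simp add: mu_def)

lemma cc_integrable:
  assumes a: "0 < \<alpha>" "\<alpha> < 1" and lam: "lam \<noteq> 0" and eta: "\<eta> \<ge> 0"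
  shows "integrable lborel (\<lambda>\<xi>. complex_of_real (mu \<alpha> \<xi>) * (complex_of_real (mu \<alpha> \<xi>) / dd lam \<eta> \<xi>))"
proof -
  define p1 where "p1 = 2 * \<alpha> - 1"
  define p2 where "p2 = 2 * \<alpha> - 3"
  define k where "k = (\<lambda>x::real. if x \<in> {0..1} then x powr p1 else 0)"
  define m where "m = (\<lambda>x::real. if x \<in> {1..} then x powr p2 else 0)"
  have ik: "integrable lborel k" unfolding k_def by (rule int_k) (use a in \<open>simp add: p1_def\<close>)
  have im: "integrable lborel m" unfolding m_def by (rule int_m) (use a in \<open>simp add: p2_def\<close>)
  define G where "G = (\<lambda>x. (k x + k (- x)) / \<bar>lam\<bar> + (m x + m (- x)))"
  have ik2: "integrable lborel (\<lambda>x. k x + k (- x))" using Bochner_Integration.integrable_add[OF ik integrable_refl[OF ik]] .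
  have im2: "integrable lborel (\<lambda>x. m x + m (- x))" using Bochner_Integration.integrable_add[OF im integrable_refl[OF im]] .
  have iG: "integrable lborel G" unfolding G_def
    by (intro Bochner_Integration.integrable_add integrable_divide_zero ik2 im2)
  have kn: "k x \<ge> 0" "m x \<ge> 0" for x by (auto simp: k_def m_def)
  have bnd: "norm (complex_of_real (mu \<alpha> \<xi>) * (complex_of_real (mu \<alpha> \<xi>) / dd lam \<eta> \<xi>)) \<le> norm (G \<xi>)" for \<xi>
  proof (cases "\<xi> = 0")
    case True
    then show ?thesis by (simp add: mu_def)
  next
    case False
    have dnz: "dd lam \<eta> \<xi> \<noteq> 0" using dd_nz[OF False eta] .
    have Gn: "G \<xi> \<ge> 0" using kn lam unfolding G_def by auto
    have n: "norm (complex_of_real (mu \<alpha> \<xi>) * (complex_of_real (mu \<alpha> \<xi>) / dd lam \<eta> \<xi>)) = \<bar>\<xi>\<bar> powr p1 / cmod (dd lam \<eta> \<xi>)"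
      using mu_nn[of \<alpha> \<xi>] by (simp add: norm_mult norm_divide mu_sq[symmetric] p1_def)
    have d1: "cmod (dd lam \<eta> \<xi>) \<ge> \<bar>lam\<bar>" using abs_Im_le_cmod[of "dd lam \<eta> \<xi>"] by (simp add: dd_def)
    have d2: "cmod (dd lam \<eta> \<xi>) \<ge> \<xi>\<^sup>2" using abs_Re_le_cmod[of "dd lam \<eta> \<xi>"] eta by (simp add: dd_def)
    have pp: "\<bar>\<xi>\<bar> powr p1 > 0" using False by simp
    show ?thesis
    proof (cases "\<bar>\<xi>\<bar> \<le> 1")
      case True
      have "k \<xi> + k (- \<xi>) = \<bar>\<xi>\<bar> powr p1" using True False by (auto simp: k_def)
      then have "G \<xi> \<ge> \<bar>\<xi>\<bar> powr p1 / \<bar>lam\<bar>" using kn unfolding G_def by auto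
      moreover have "\<bar>\<xi>\<bar> powr p1 / cmod (dd lam \<eta> \<xi>) \<le> \<bar>\<xi>\<bar> powr p1 / \<bar>lam\<bar>"
        using d1 lam pp by (intro divide_left_mono) (auto intro!: mult_pos_pos)
      ultimately show ?thesis using n Gn by simp
    next
      case gt: False
      have "m \<xi> + m (- \<xi>) = \<bar>\<xi>\<bar> powr p2" using gt by (auto simp: m_def)
      then have "G \<xi> \<ge> \<bar>\<xi>\<bar> powr p2" using kn lam unfolding G_def by auto
      moreover have "\<bar>\<xi>\<bar> powr p1 / cmod (dd lam \<eta> \<xi>) \<le> \<bar>\<xi>\<bar> powr p1 / \<xi>\<^sup>2"
      proof -
        have "\<xi>\<^sup>2 > 0" using False by simp
        then show ?thesis using d2 pp by (intro divide_left_mono) (auto intro!: mult_pos_pos)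
      qed
      moreover have "\<bar>\<xi>\<bar> powr p1 / \<xi>\<^sup>2 = \<bar>\<xi>\<bar> powr p2"
      proof -
        have e2: "\<xi>\<^sup>2 = \<bar>\<xi>\<bar> powr 2" using False by (simp add: powr_numeral)
        have "\<bar>\<xi>\<bar> powr p1 / \<xi>\<^sup>2 = \<bar>\<xi>\<bar> powr p1 / \<bar>\<xi>\<bar> powr 2" by (simp only: e2)
        also have "\<dots> = \<bar>\<xi>\<bar> powr (p1 - 2)" by (rule powr_diff[symmetric])
        also have "p1 - 2 = p2" by (simp add: p1_def p2_def)
        finally show ?thesis .
      qed
      ultimately show ?thesis using n Gn by simp
    qed
  qed
  show ?thesis
    by (rule Bochner_Integration.integrable_bound[OF iG]) (use bnd in \<open>auto simp: dd_def\<close>)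
qed

lemma Re_integrand:
  "Re (complex_of_real (mu \<alpha> \<xi>) * (complex_of_real (mu \<alpha> \<xi>) / dd lam \<eta> \<xi>)) =
     mu \<alpha> \<xi> * mu \<alpha> \<xi> * (\<xi>\<^sup>2 + \<eta>) / ((\<xi>\<^sup>2 + \<eta>)\<^sup>2 + lam\<^sup>2)"
  by (simp add: dd_def Re_divide power2_eq_square)

lemma cc_Re_pos:
  assumes a: "0 < \<alpha>" "\<alpha> < 1" and lam: "lam \<noteq> 0" and eta: "\<eta> \<ge> 0"
  shows "Re (cc \<alpha> lam \<eta>) > 0"
proof -
  let ?f = "\<lambda>\<xi>. complex_of_real (mu \<alpha> \<xi>) * (complex_of_real (mu \<alpha> \<xi>) / dd lam \<eta> \<xi>)"
  let ?g = "\<lambda>\<xi>. mu \<alpha> \<xi> * mu \<alpha> \<xi> * (\<xi>\<^sup>2 + \<eta>) / ((\<xi>\<^sup>2 + \<eta>)\<^sup>2 + lam\<^sup>2)"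
  have i: "integrable lborel ?f" by (rule cc_integrable[OF a lam eta])
  have ReI: "Re (cc \<alpha> lam \<eta>) = integral\<^sup>L lborel ?g"
    unfolding cc_def integral_bounded_linear[OF bounded_linear_Re i, symmetric] Re_integrand ..
  have ig: "integrable lborel ?g"
    using integrable_Re[OF i] unfolding Re_integrand .
  have nn: "?g \<xi> \<ge> 0" for \<xi> using mu_nn[of \<alpha> \<xi>] eta by (intro divide_nonneg_nonneg mult_nonneg_nonneg) auto
  have pos: "?g \<xi> > 0" if "\<xi> \<noteq> 0" for \<xi>
  proof -
    have "\<xi>\<^sup>2 > 0" using that by simp
    have "lam\<^sup>2 > 0" using lam by simp
    then have "(\<xi>\<^sup>2 + \<eta>)\<^sup>2 + lam\<^sup>2 > 0" by (simp add: add_nonneg_pos)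
    with \<open>\<xi>\<^sup>2 > 0\<close> show ?thesis using mu_pos[OF that, of \<alpha>] eta lam
      by (intro divide_pos_pos mult_pos_pos) (auto intro: add_pos_nonneg add_pos_pos)
  qed
  have "integral\<^sup>L lborel ?g \<noteq> 0"
  proof
    assume "integral\<^sup>L lborel ?g = 0"
    then have "AE \<xi> in lborel. ?g \<xi> = 0" using integral_nonneg_eq_0_iff_AE[OF ig] nn by auto
    then have "AE \<xi> in lborel. ?g \<xi> = 0 \<and> \<xi> \<noteq> 0" using AE_lborel_singleton[of 0] by (rule eventually_conj)
    then have "AE \<xi> in (lborel::real measure). False" by (rule eventually_mono) (use pos in force)
    then have "ae_filter (lborel::real measure) = bot" using trivial_limit_def by blast
    then have "emeasure (lborel::real measure) (space lborel) = 0" using ae_filter_eq_bot_iff by blast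
    then show False by simp
  qed
  moreover have "integral\<^sup>L lborel ?g \<ge> 0" using nn by (intro integral_nonneg_AE) auto
  ultimately show ?thesis using ReI by simp
qed




lemma side:
  fixes u u1 u2 U :: "real \<Rightarrow> complex" and \<phi> :: "real \<Rightarrow> real \<Rightarrow> complex"
  assumes lh: "lo < hi" and h1: "H1_with lo hi u u1" and h2: "H1_with lo hi u1 u2"
    and rk: "\<rho> > 0" "k > 0" and eta: "\<eta> \<ge> 0"
    and mphi: "L2_prod lo hi \<phi>"
    and equ: "\<forall>x\<in>{lo..hi}. \<i> * complex_of_real lam * u x - U x = 0"
    and eqU: "AE x in lborel. x \<in> {lo..hi} \<longrightarrow>
        \<i> * complex_of_real lam * U x
          - complex_of_real (1 / \<rho>) * (complex_of_real k * u2 x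
              - complex_of_real (frakC \<alpha>) * (LINT \<xi>|lborel. complex_of_real (mu \<alpha> \<xi>) * \<phi> x \<xi>)) = 0"
    and eqphi: "AE z in lborel \<Otimes>\<^sub>M lborel. fst z \<in> {lo..hi} \<longrightarrow>
        \<i> * complex_of_real lam * \<phi> (fst z) (snd z)
          - (- complex_of_real ((snd z)\<^sup>2 + \<eta>) * \<phi> (fst z) (snd z)
             + complex_of_real (mu \<alpha> (snd z)) * U (fst z)) = 0"
  shows "((- complex_of_real (lam\<^sup>2 * \<rho>) + \<i> * complex_of_real lam * complex_of_real (frakC \<alpha>) * cc \<alpha> lam \<eta>)
            / complex_of_real k) * of_real (integral {lo..hi} (\<lambda>x. (cmod (u x))\<^sup>2)) =
     u1 hi * cnj (u hi) - u1 lo * cnj (u lo) - of_real (integral {lo..hi} (\<lambda>x. (cmod (u1 x))\<^sup>2))"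
    and "continuous_on {lo..hi} u" "continuous_on {lo..hi} u1"
    and "\<And>x. x \<in> {lo<..<hi} \<Longrightarrow> (u has_vector_derivative u1 x) (at x)"
    and "AE z in lborel \<Otimes>\<^sub>M lborel. fst z \<in> {lo..hi} \<longrightarrow>
           \<phi> (fst z) (snd z) = complex_of_real (mu \<alpha> (snd z)) * U (fst z) / dd lam \<eta> (snd z)"
proof -
  define E where "E = - complex_of_real (lam\<^sup>2 * \<rho>) + \<i> * complex_of_real lam * complex_of_real (frakC \<alpha>) * cc \<alpha> lam \<eta>"
  have cu: "continuous_on {lo..hi} u" and cu1: "continuous_on {lo..hi} u1"
    and mu1: "(\<lambda>x. indicator {lo..hi} x *\<^sub>R u1 x) \<in> borel_measurable lborel"
    and mu2: "(\<lambda>x. indicator {lo..hi} x *\<^sub>R u2 x) \<in> borel_measurable lborel"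
    and w1: "weak_deriv lo hi u u1" and w2: "weak_deriv lo hi u1 u2"
    using h1 h2 unfolding H1_with_def L2_on_def by auto
  show "continuous_on {lo..hi} u" "continuous_on {lo..hi} u1" by (fact cu, fact cu1)
  have mphi': "(\<lambda>z. indicator ({lo..hi} \<times> UNIV) z *\<^sub>R \<phi> (fst z) (snd z)) \<in> borel_measurable (lborel \<Otimes>\<^sub>M lborel)"
    using mphi unfolding L2_prod_def by auto
  note ph = phi_lemma[OF mphi' eqphi eta]
  show "AE z in lborel \<Otimes>\<^sub>M lborel. fst z \<in> {lo..hi} \<longrightarrow>
           \<phi> (fst z) (snd z) = complex_of_real (mu \<alpha> (snd z)) * U (fst z) / dd lam \<eta> (snd z)"
    by (rule ph(1))
  have Uu: "U x = \<i> * complex_of_real lam * u x" if "x \<in> {lo..hi}" for x using equ that by auto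
  have ae2: "AE x in lborel. x \<in> {lo..hi} \<longrightarrow> u2 x = E / complex_of_real k * u x"
    using eqU ph(2)
  proof eventually_elim
    case (elim x)
    show ?case
    proof
      assume x: "x \<in> {lo..hi}"
      have "\<i> * complex_of_real lam * U x
          - complex_of_real (1 / \<rho>) * (complex_of_real k * u2 x
              - complex_of_real (frakC \<alpha>) * (U x * cc \<alpha> lam \<eta>)) = 0"
        using elim x by simp
      then have "\<i> * complex_of_real lam * (\<i> * complex_of_real lam * u x)
          - complex_of_real (1 / \<rho>) * (complex_of_real k * u2 x
              - complex_of_real (frakC \<alpha>) * ((\<i> * complex_of_real lam * u x) * cc \<alpha> lam \<eta>)) = 0"
        using Uu[OF x] by simp
      then have "complex_of_real k * u2 x = E * u x"
        using rk unfolding E_def by (simp add: field_simps power2_eq_square)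
      then show "u2 x = E / complex_of_real k * u x" using rk by (simp add: field_simps)
    qed
  qed
  have wd1: "integral {lo..hi} (\<lambda>x. u x * of_real (deriv \<psi> x)) = - integral {lo..hi} (\<lambda>x. u1 x * of_real (\<psi> x))"
    if "test_fun lo hi \<psi>" for \<psi>
    by (rule weak_to_integral[OF w1 cu cu1 mu1 _ that]) simp
  have ch: "continuous_on {lo..hi} (\<lambda>x. E / complex_of_real k * u x)" by (intro continuous_intros cu)
  have wd2: "integral {lo..hi} (\<lambda>x. u1 x * of_real (deriv \<psi> x)) = - integral {lo..hi} (\<lambda>x. E / complex_of_real k * u x * of_real (\<psi> x))"
    if "test_fun lo hi \<psi>" for \<psi>
    by (rule weak_to_integral[OF w2 cu1 ch mu2 ae2 that])
  have du: "(u has_vector_derivative u1 x) (at x)" if "x \<in> {lo<..<hi}" for x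
    using key_deriv[OF cu cu1 wd1] that by auto
  then show "\<And>x. x \<in> {lo<..<hi} \<Longrightarrow> (u has_vector_derivative u1 x) (at x)" by blast
  have du1: "(u1 has_vector_derivative E / complex_of_real k * u x) (at x)" if "x \<in> {lo<..<hi}" for x
    using key_deriv[OF cu1 ch wd2] that by auto
  show "(E / complex_of_real k) * of_real (integral {lo..hi} (\<lambda>x. (cmod (u x))\<^sup>2)) =
     u1 hi * cnj (u hi) - u1 lo * cnj (u lo) - of_real (integral {lo..hi} (\<lambda>x. (cmod (u1 x))\<^sup>2))"
    by (rule energy[OF _ cu cu1 du du1]) (use lh in auto)
qed




theorem proposition4p2:
  fixes \<rho>1 \<rho>2 k1 k2 L \<alpha> \<eta> lam :: real
    and u u1 u2 U :: "real \<Rightarrow> complex"   \<comment> \<open>u, u_x, u_xx, U on [-L,0]\<close>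
    and v v1 v2 V :: "real \<Rightarrow> complex"   \<comment> \<open>v, v_x, v_xx, V on [0,L]\<close>
    and \<phi>1 \<phi>2 :: "real \<Rightarrow> real \<Rightarrow> complex"  \<comment> \<open>functions of (x, xi)\<close>
  assumes params: "\<rho>1 > 0" "\<rho>2 > 0" "k1 > 0" "k2 > 0" "L > 0" "0 < \<alpha>" "\<alpha> < 1" "\<eta> \<ge> 0"
    \<comment> \<open>the state lies in D(A)\<close>
    and dom_uv: "H10 L u v"
    and dom_UV: "H10 L U V"
    and dom_u: "H1_with (-L) 0 u u1" "H1_with (-L) 0 u1 u2"
    and dom_v: "H1_with 0 L v v1" "H1_with 0 L v1 v2"
    and dom_trans: "complex_of_real k1 * u1 0 = complex_of_real k2 * v1 0"
    and dom_phi1: "L2_prod (-L) 0 \<phi>1"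
      "L2_prod (-L) 0 (\<lambda>x \<xi>. complex_of_real \<bar>\<xi>\<bar> * \<phi>1 x \<xi>)"
      "L2_prod (-L) 0 (\<lambda>x \<xi>. - complex_of_real (\<xi>\<^sup>2 + \<eta>) * \<phi>1 x \<xi>
                                + complex_of_real (mu \<alpha> \<xi>) * U x)"
    and dom_phi2: "L2_prod 0 L \<phi>2"
      "L2_prod 0 L (\<lambda>x \<xi>. complex_of_real \<bar>\<xi>\<bar> * \<phi>2 x \<xi>)"
      "L2_prod 0 L (\<lambda>x \<xi>. - complex_of_real (\<xi>\<^sup>2 + \<eta>) * \<phi>2 x \<xi>
                                + complex_of_real (mu \<alpha> \<xi>) * V x)"
    \<comment> \<open>(i lambda I - A) applied to the state is zero in H\<close>
    and eq_u: "\<forall>x\<in>{-L..0}. \<i> * complex_of_real lam * u x - U x = 0"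
    and eq_v: "\<forall>x\<in>{0..L}. \<i> * complex_of_real lam * v x - V x = 0"
    and eq_U: "AE x in lborel. x \<in> {-L..0} \<longrightarrow>
        \<i> * complex_of_real lam * U x
          - complex_of_real (1 / \<rho>1) * (complex_of_real k1 * u2 x
              - complex_of_real (frakC \<alpha>) * (LINT \<xi>|lborel. complex_of_real (mu \<alpha> \<xi>) * \<phi>1 x \<xi>)) = 0"
    and eq_V: "AE x in lborel. x \<in> {0..L} \<longrightarrow>
        \<i> * complex_of_real lam * V x
          - complex_of_real (1 / \<rho>2) * (complex_of_real k2 * v2 x
              - complex_of_real (frakC \<alpha>) * (LINT \<xi>|lborel. complex_of_real (mu \<alpha> \<xi>) * \<phi>2 x \<xi>)) = 0"
    and eq_phi1: "AE z in lborel \<Otimes>\<^sub>M lborel. fst z \<in> {-L..0} \<longrightarrow>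
        \<i> * complex_of_real lam * \<phi>1 (fst z) (snd z)
          - (- complex_of_real ((snd z)\<^sup>2 + \<eta>) * \<phi>1 (fst z) (snd z)
             + complex_of_real (mu \<alpha> (snd z)) * U (fst z)) = 0"
    and eq_phi2: "AE z in lborel \<Otimes>\<^sub>M lborel. fst z \<in> {0..L} \<longrightarrow>
        \<i> * complex_of_real lam * \<phi>2 (fst z) (snd z)
          - (- complex_of_real ((snd z)\<^sup>2 + \<eta>) * \<phi>2 (fst z) (snd z)
             + complex_of_real (mu \<alpha> (snd z)) * V (fst z)) = 0"
  shows "(\<forall>x\<in>{-L..0}. u x = 0) \<and> (\<forall>x\<in>{0..L}. v x = 0)
       \<and> (AE x in lborel. x \<in> {-L..0} \<longrightarrow> U x = 0)
       \<and> (AE x in lborel. x \<in> {0..L} \<longrightarrow> V x = 0)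
       \<and> (AE z in lborel \<Otimes>\<^sub>M lborel. fst z \<in> {-L..0} \<longrightarrow> \<phi>1 (fst z) (snd z) = 0)
       \<and> (AE z in lborel \<Otimes>\<^sub>M lborel. fst z \<in> {0..L} \<longrightarrow> \<phi>2 (fst z) (snd z) = 0)"
proof -
  note sU = side[of "-L" 0 u u1 u2 \<rho>1 k1 \<eta> \<phi>1 lam U \<alpha>, OF _ dom_u(1) dom_u(2) params(1) params(3) params(8) dom_phi1(1) eq_u eq_U eq_phi1]
  note sV = side[of 0 L v v1 v2 \<rho>2 k2 \<eta> \<phi>2 lam V \<alpha>, OF _ dom_v(1) dom_v(2) params(2) params(4) params(8) dom_phi2(1) eq_v eq_V eq_phi2]
  have L0: "-L < 0" "0 < L" using params by auto
  define c where "c = cc \<alpha> lam \<eta>"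
  define C where "C = frakC \<alpha>"
  define E1 where "E1 = - complex_of_real (lam\<^sup>2 * \<rho>1) + \<i> * complex_of_real lam * complex_of_real C * c"
  define E2 where "E2 = - complex_of_real (lam\<^sup>2 * \<rho>2) + \<i> * complex_of_real lam * complex_of_real C * c"
  define A where "A = integral {-L..0} (\<lambda>x. (cmod (u x))\<^sup>2)"
  define P where "P = integral {-L..0} (\<lambda>x. (cmod (u1 x))\<^sup>2)"
  define B where "B = integral {0..L} (\<lambda>x. (cmod (v x))\<^sup>2)"
  define Q where "Q = integral {0..L} (\<lambda>x. (cmod (v1 x))\<^sup>2)"
  have Cpos: "C > 0"
  proof -
    have "sin (\<alpha> * pi) > 0" using params(6,7) by (intro sin_gt_zero) auto
    then show ?thesis by (simp add: C_def frakC_def)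
  qed
  have bc: "u (-L) = 0" "v L = 0" "u 0 = v 0" using dom_uv unfolding H10_def by auto
  have eU: "(E1 / complex_of_real k1) * of_real A = u1 0 * cnj (u 0) - of_real P"
    using sU(1)[OF L0(1)] bc(1) unfolding E1_def A_def P_def c_def C_def by simp
  have eV: "(E2 / complex_of_real k2) * of_real B = - (v1 0 * cnj (v 0)) - of_real Q"
    using sV(1)[OF L0(2)] bc(2) unfolding E2_def B_def Q_def c_def C_def by simp
  have eU': "E1 * of_real A = complex_of_real k1 * u1 0 * cnj (u 0) - of_real (k1 * P)"
    using eU params(3) by (simp add: field_simps)
  have eV': "E2 * of_real B = - (complex_of_real k2 * v1 0 * cnj (v 0)) - of_real (k2 * Q)"
    using eV params(4) by (simp add: field_simps)
  have sum: "E1 * of_real A + E2 * of_real B = - of_real (k1 * P + k2 * Q)"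
    using eU' eV' dom_trans bc(3) by (simp add: algebra_simps)
  have ImE: "Im (E1 * of_real A + E2 * of_real B) = lam * C * Re c * (A + B)"
    unfolding E1_def E2_def by (simp add: algebra_simps)
  have Im0: "lam * C * Re c * (A + B) = 0" using sum ImE by simp
  have cuv: "continuous_on {-L..0} u" "continuous_on {-L..0} u1" "continuous_on {0..L} v" "continuous_on {0..L} v1"
    using sU(2,3)[OF L0(1)] sV(2,3)[OF L0(2)] by auto
  have Ann: "A \<ge> 0" "B \<ge> 0" "P \<ge> 0" "Q \<ge> 0"
    unfolding A_def B_def P_def Q_def
    by (intro integral_nonneg integrable_continuous_interval continuous_intros cuv; simp)+
  have zero_of: "\<forall>x\<in>{a..b}. f x = 0"
    if "a < b" "continuous_on {a..b} f" "integral {a..b} (\<lambda>x. (cmod (f x))\<^sup>2) = 0" for a b :: real and f :: "real \<Rightarrow> complex"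
  proof -
    have "integral (cbox a b) (\<lambda>x. (cmod (f x))\<^sup>2) = 0 \<longleftrightarrow> (\<forall>x\<in>cbox a b. (cmod (f x))\<^sup>2 = 0)"
      by (rule integral_cbox_eq_0_iff) (use that in \<open>auto intro!: continuous_intros\<close>)
    then show ?thesis using that by simp
  qed
  have uv0: "(\<forall>x\<in>{-L..0}. u x = 0) \<and> (\<forall>x\<in>{0..L}. v x = 0)"
  proof (cases "lam = 0")
    case False
    have "Re c > 0" unfolding c_def by (rule cc_Re_pos) (use params False in auto)
    then have "lam * C * Re c \<noteq> 0" using False Cpos by simp
    then have "A + B = 0" using Im0 by simp
    then have "A = 0" "B = 0" using Ann by auto
    have "\<forall>x\<in>{-L..0}. u x = 0" by (rule zero_of[OF L0(1) cuv(1)]) (use \<open>A = 0\<close> in \<open>simp only: A_def\<close>)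
    moreover have "\<forall>x\<in>{0..L}. v x = 0" by (rule zero_of[OF L0(2) cuv(3)]) (use \<open>B = 0\<close> in \<open>simp only: B_def\<close>)
    ultimately show ?thesis by blast
  next
    case True
    then have E0: "E1 = 0" "E2 = 0" unfolding E1_def E2_def by simp_all
    have "0 = - complex_of_real (k1 * P + k2 * Q)" using sum unfolding E0 by (simp only: mult_zero_left add_0_left)
    then have kpq: "k1 * P + k2 * Q = 0" by (metis neg_0_equal_iff_equal of_real_eq_0_iff)
    have "k1 * P \<ge> 0" "k2 * Q \<ge> 0" using Ann params(3,4) by simp_all
    then have "k1 * P = 0" "k2 * Q = 0" using kpq by linarith+
    then have "P = 0" "Q = 0" using params(3,4) by simp_all
    have u10: "\<forall>x\<in>{-L..0}. u1 x = 0" by (rule zero_of[OF L0(1) cuv(2)]) (use \<open>P = 0\<close> in \<open>simp only: P_def\<close>)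
    have v10: "\<forall>x\<in>{0..L}. v1 x = 0" by (rule zero_of[OF L0(2) cuv(4)]) (use \<open>Q = 0\<close> in \<open>simp only: Q_def\<close>)
    have "u x = 0" if x: "x \<in> {-L..0}" for x
    proof (cases "x = -L")
      case True then show ?thesis using bc by simp
    next
      case False
      then have lx: "-L \<le> x" "x \<le> 0" using x by auto
      have "(u1 has_integral (u x - u (-L))) {-L..x}"
      proof (rule fundamental_theorem_of_calculus_interior[OF lx(1)])
        show "continuous_on {-L..x} u" using continuous_on_subset[OF cuv(1)] lx by auto
        fix y assume "y \<in> {-L<..<x}"
        then show "(u has_vector_derivative u1 y) (at y)" using sU(4)[OF L0(1)] lx by auto
      qed
      moreover have "(u1 has_integral 0) {-L..x}"
        by (rule has_integral_is_0) (use u10 lx in auto)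
      ultimately have "u x - u (-L) = 0" by (rule has_integral_unique)
      then show ?thesis using bc by simp
    qed
    moreover have "v x = 0" if x: "x \<in> {0..L}" for x
    proof (cases "x = L")
      case True then show ?thesis using bc by simp
    next
      case False
      then have lx: "x \<le> L" "0 \<le> x" using x by auto
      have "(v1 has_integral (v L - v x)) {x..L}"
      proof (rule fundamental_theorem_of_calculus_interior[OF lx(1)])
        show "continuous_on {x..L} v" using continuous_on_subset[OF cuv(3)] lx by auto
        fix y assume "y \<in> {x<..<L}"
        then show "(v has_vector_derivative v1 y) (at y)" using sV(4)[OF L0(2)] lx by auto
      qed
      moreover have "(v1 has_integral 0) {x..L}"
        by (rule has_integral_is_0) (use v10 lx in auto)
      ultimately have "v L - v x = 0" by (rule has_integral_unique)
      then show ?thesis using bc by simp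
    qed
    ultimately show ?thesis by blast
  qed
  have U0: "\<forall>x\<in>{-L..0}. U x = 0" using uv0 eq_u by auto
  have V0: "\<forall>x\<in>{0..L}. V x = 0" using uv0 eq_v by auto
  have p1: "AE z in lborel \<Otimes>\<^sub>M lborel. fst z \<in> {-L..0} \<longrightarrow> \<phi>1 (fst z) (snd z) = 0"
    using sU(5)[OF L0(1)] by eventually_elim (use U0 in auto)
  have p2: "AE z in lborel \<Otimes>\<^sub>M lborel. fst z \<in> {0..L} \<longrightarrow> \<phi>2 (fst z) (snd z) = 0"
    using sV(5)[OF L0(2)] by eventually_elim (use V0 in auto)
  have a1: "AE x in lborel. x \<in> {-L..0} \<longrightarrow> U x = 0" using U0 by (intro AE_I2) blast
  have a2: "AE x in lborel. x \<in> {0..L} \<longrightarrow> V x = 0" using V0 by (intro AE_I2) blast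
  show ?thesis using uv0 a1 a2 p1 p2 by blast
qed


end
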